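(* Consider negligible unlearning cost ($\theta_i=0$ for all $i$), $d_i^{\max}=d^{\max}$ for all $i$, and $m_1<\dots<m_I$ with $m_i=(\xi_i\ell_i)^{-1}-\epsilon_i$. Let $d^a$ denote the unique Nash equilibrium of the allowing game. (1) Suppose some $j\in\mathcal I$ satisfies $(I-j)d^{\max}<m_j<(I-j+1)d^{\max}$ (so $d^a_i=0$ for $i<j$, $d^a_j=m_j-(I-j)d^{\max}\in(0,d^{\max})$, $d^a_i=d^{\max}$ for $i>j$), and $$\ln\frac{(I-j+1)d^{\max}+\epsilon_i}{(I-j)d^{\max}+\epsilon_i}\ge\xi_i\ell_i d^{\max}\quad\text{for all } i\in\{j,\dots,I\}.$$ Then the profile $d^f$ with $d^f_i=0$ for $i<j$ and $d^f_i=d^{\max}$ for $i\ge j$ is a Nash equilibrium of the forbidding game; user $j$'s payoff at $d^f$ is strictly lower than at $d^a$, every other user's payoff at $d^f$ is strictly higher than at $d^a$, and $\sum_i d^f_i>\sum_i d^a_i$. (2) Suppose some $j\in\mathcal I$ satisfies $(I-j)d^{\max}<m_j<(I-j+1)d^{\max}$ and $$\ln\frac{(I-j+1)d^{\max}+\epsilon_i}{(I-j)d^{\max}+\epsilon_i}\le\xi_i\ell_i d^{\max}\quad\text{for all } i\in\{1,\dots,j\}.$$ Then the profile $d^f$ with $d^f_i=0$ for $i\le j$ and $d^f_i=d^{\max}$ for $i>j$ is a Nash equilibrium of the forbidding game; every user's payoff at $d^f$ is strictly lower than at $d^a$, and $\sum_i d^f_i<\sum_i d^a_i$. (3) If no $j\in\mathcal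 I$ satisfies $(I-j)d^{\max}\le m_j\le(I-j+1)d^{\max}$, then $d^a$ (in which every user chooses $0$ or $d^{\max}$) is a Nash equilibrium of the forbidding game; hence all users' payoffs and the total remaining data size coincide in the two games at this equilibrium.
   Context: Allowing game (negligible unlearning cost): a finite set of users $\mathcal I=\{1,\dots,I\}$, $I\ge 2$, each with parameters $d_i^{\max}>0$, $\epsilon_i>0$, $\xi_i>0$, $\ell_i>0$; each user chooses $d_i\in[0,d_i^{\max}]$ (data kept), with payoff $U_i(d_i,\boldsymbol{d_{-i}})=\ln\big(\sum_{j\in\mathcal I}d_j+\epsilon_i\big)-\xi_i d_i\ell_i$. Under the stated hypotheses ($d_i^{\max}=d^{\max}$, strictly increasing $m_i$) this game has a unique Nash equilibrium. Forbidding game: same payoffs but strategy set $\{0,d_i^{\max}\}$ for each user $i$. In either game a (pure) Nash equilibrium is a profile from which no user can strictly increase its payoff by unilaterally switching to another strategy in its own strategy set. *)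

theory Defs
  imports Complex_Main
begin

text \<open>Users are indexed by 1..I. A strategy profile is a function nat => real;
  only its values on {1..I} matter.\<close>

definition payoff :: "nat \<Rightarrow> (nat \<Rightarrow> real) \<Rightarrow> (nat \<Rightarrow> real) \<Rightarrow> (nat \<Rightarrow> real)
    \<Rightarrow> nat \<Rightarrow> (nat \<Rightarrow> real) \<Rightarrow> real" where
  "payoff I eps xi ell i d = ln ((\<Sum>j\<in>{1..I}. d j) + eps i) - xi i * d i * ell i"

definition is_NE :: "nat \<Rightarrow> (nat \<Rightarrow> real) \<Rightarrow> (nat \<Rightarrow> real) \<Rightarrow> (nat \<Rightarrow> real)
    \<Rightarrow> real set \<Rightarrow> (nat \<Rightarrow> real) \<Rightarrow> bool" where
  "is_NE I eps xi ell S d \<longleftrightarrow>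
     (\<forall>i\<in>{1..I}. d i \<in> S) \<and>
     (\<forall>i\<in>{1..I}. \<forall>x\<in>S. payoff I eps xi ell i (d(i := x)) \<le> payoff I eps xi ell i d)"

definition allowing_NE where
  "allowing_NE I eps xi ell dmax d \<longleftrightarrow> is_NE I eps xi ell {0..dmax} d"

definition forbidding_NE where
  "forbidding_NE I eps xi ell dmax d \<longleftrightarrow> is_NE I eps xi ell {0, dmax} d"

definition mval :: "(nat \<Rightarrow> real) \<Rightarrow> (nat \<Rightarrow> real) \<Rightarrow> (nat \<Rightarrow> real) \<Rightarrow> nat \<Rightarrow> real" where
  "mval eps xi ell i = 1 / (xi i * ell i) - eps i"

end

theory Submission imports Defs begin
lemma ln_strict: fixes a b :: real assumes "0<a" "0<b" "a\<noteq>b" shows "ln a - ln b < (a-b)/b"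
proof -
  have "a/b > 0" "a/b \<noteq> 1" using assms by auto
  then have "ln (a/b) < a/b - 1" by (smt (verit) ln_eq_minus_one ln_le_minus_one)
  then show ?thesis using assms by (simp add: ln_div diff_divide_distrib)
qed
lemma ln_weak: fixes a b :: real assumes "0<a" "0<b" shows "ln a - ln b \<le> (a-b)/b"
  using ln_strict[OF assms] by (cases "a=b") auto

lemma sum_upd: "finite A \<Longrightarrow> i\<in>A \<Longrightarrow> sum (d(i:=x)) A = sum d A - d i + (x::real)"
  by (simp add: sum.remove)

lemma sum_piece:
  fixes f :: "nat \<Rightarrow> real"
  assumes "1 \<le> j" "j \<le> I" "\<forall>i\<in>{1..I}. i<j \<longrightarrow> f i = 0" "\<forall>i\<in>{1..I}. j<i \<longrightarrow> f i = b"
  shows "sum f {1..I} = f j + (real I - real j) * b"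
proof -
  have e: "{1..I} = {1..<j} \<union> insert j {j<..I}" using assms by auto
  have "sum f {1..<j} = 0" using assms by (intro sum.neutral) auto
  moreover have "sum f {j<..I} = sum (\<lambda>_. b) {j<..I}" using assms by (intro sum.cong) auto
  moreover have "sum (\<lambda>_. b) {j<..I} = (real I - real j) * b" using assms by (simp add: of_nat_diff)
  ultimately show ?thesis unfolding e by (subst sum.union_disjoint) auto
qed

lemma payoff_upd: "i\<in>{1..I} \<Longrightarrow> payoff I eps xi ell i (d(i:=x)) = ln (sum d {1..I} - d i + x + eps i) - xi i * ell i * x"
  unfolding payoff_def by (subst sum_upd) auto
lemma payoff_alt: "payoff I eps xi ell i d = ln (sum d {1..I} + eps i) - xi i * ell i * d i"
  by (simp add: payoff_def)

lemma NE_cond: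
  assumes ne: "allowing_NE I eps xi ell dmax d" and i: "i\<in>{1..I}" and e: "eps i > 0"
    and c: "xi i * ell i > 0"
  shows "0 \<le> d i \<and> d i \<le> dmax \<and> (d i < dmax \<longrightarrow> mval eps xi ell i \<le> sum d {1..I})
      \<and> (0 < d i \<longrightarrow> sum d {1..I} \<le> mval eps xi ell i)"
proof -
  define S where "S = sum d {1..I}"
  define C where "C = xi i * ell i"
  define m where "m = mval eps xi ell i"
  have mC: "1 / C = m + eps i" unfolding m_def C_def mval_def by simp
  have C0: "C > 0" using c C_def by simp
  have rng: "\<forall>k\<in>{1..I}. d k \<in> {0..dmax}" and dev: "\<forall>x\<in>{0..dmax}. payoff I eps xi ell i (d(i := x)) \<le> payoff I eps xi ell i d"
    using ne i unfolding allowing_NE_def is_NE_def by auto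
  have S0: "S \<ge> 0" unfolding S_def using rng by (intro sum_nonneg) auto
  have di: "0 \<le> d i" "d i \<le> dmax" using rng i by auto
  have up: "m \<le> S" if lt: "d i < dmax"
  proof (rule ccontr)
    assume "\<not> m \<le> S"
    define \<delta> where "\<delta> = min (dmax - d i) (m - S)"
    have dp: "\<delta> > 0" using lt \<open>\<not> m \<le> S\<close> unfolding \<delta>_def by auto
    define y0 where "y0 = S + eps i"
    define y1 where "y1 = y0 + \<delta>"
    have y0: "y0 > 0" using S0 e y0_def by simp
    have y1: "y1 > 0" "y1 \<le> 1 / C" using y0 dp unfolding y1_def y0_def mC \<delta>_def by auto
    have "ln y0 - ln y1 < (y0 - y1) / y1" using ln_strict[of y0 y1] y0 y1 dp y1_def by simp
    also have "\<dots> = - (\<delta> / y1)" unfolding y1_def by simp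
    also have "\<dots> \<le> - (C * \<delta>)"
    proof -
      have "C * y1 \<le> 1" using y1 C0 by (simp add: field_simps)
      then have "C * y1 * \<delta> \<le> 1 * \<delta>" using dp by (intro mult_right_mono) auto
      then have "C * \<delta> * y1 \<le> \<delta>" by (simp add: algebra_simps)
      then show ?thesis using y1 by (simp add: field_simps)
    qed
    finally have A: "ln y1 - C * \<delta> > ln y0" by simp
    have "d i + \<delta> \<in> {0..dmax}" using di dp unfolding \<delta>_def by auto
    then have "payoff I eps xi ell i (d(i := d i + \<delta>)) \<le> payoff I eps xi ell i d" using dev by blast
    moreover have "payoff I eps xi ell i (d(i := d i + \<delta>)) = ln y1 - C * (d i + \<delta>)"
      unfolding payoff_upd[OF i] S_def[symmetric] C_def[symmetric] y1_def y0_def by (simp add: algebra_simps)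
    moreover have "payoff I eps xi ell i d = ln y0 - C * d i"
      unfolding payoff_alt S_def[symmetric] C_def[symmetric] y0_def by simp
    ultimately show False using A by (simp add: algebra_simps)
  qed
  have down: "S \<le> m" if gt: "0 < d i"
  proof (rule ccontr)
    assume "\<not> S \<le> m"
    define \<delta> where "\<delta> = min (d i) (S - m)"
    have dp: "\<delta> > 0" using gt \<open>\<not> S \<le> m\<close> unfolding \<delta>_def by auto
    define y0 where "y0 = S + eps i"
    define y1 where "y1 = y0 - \<delta>"
    have y1: "1 / C \<le> y1" using dp unfolding y1_def y0_def mC \<delta>_def by auto
    have "1/C > 0" using C0 by simp
    then have y1p: "y1 > 0" using y1 by linarith
    have y0: "y0 > 0" using y1p dp y1_def by simp
    have "ln y0 - ln y1 < (y0 - y1) / y1" using ln_strict[of y0 y1] y0 y1p dp y1_def by simp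
    also have "\<dots> = \<delta> / y1" unfolding y1_def by simp
    also have "\<dots> \<le> C * \<delta>"
    proof -
      have "1 \<le> C * y1" using y1 C0 by (simp add: field_simps)
      then have "1 * \<delta> \<le> C * y1 * \<delta>" using dp by (intro mult_right_mono) auto
      then have "\<delta> \<le> C * \<delta> * y1" by (simp add: algebra_simps)
      then show ?thesis using y1p by (simp add: field_simps)
    qed
    finally have A: "ln y1 + C * \<delta> > ln y0" by simp
    have "d i - \<delta> \<in> {0..dmax}" using di dp unfolding \<delta>_def by auto
    then have "payoff I eps xi ell i (d(i := d i - \<delta>)) \<le> payoff I eps xi ell i d" using dev by blast
    moreover have "payoff I eps xi ell i (d(i := d i - \<delta>)) = ln y1 - C * (d i - \<delta>)"
      unfolding payoff_upd[OF i] S_def[symmetric] C_def[symmetric] y1_def y0_def by (simp add: algebra_simps)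
    moreover have "payoff I eps xi ell i d = ln y0 - C * d i"
      unfolding payoff_alt S_def[symmetric] C_def[symmetric] y0_def by simp
    ultimately show False using A by (simp add: algebra_simps)
  qed
  show ?thesis using di up down unfolding S_def m_def by auto
qed
lemma up_lem: fixes y d c :: real assumes "y > 0" "d > 0" "c * y \<ge> 1" shows "ln (y + d) - ln y < c * d"
proof -
  have "ln (y + d) - ln y < (y + d - y) / y" using ln_strict[of "y+d" y] assms by simp
  also have "\<dots> = d / y" by simp
  also have "\<dots> \<le> c * d"
  proof -
    have "1 * d \<le> c * y * d" using assms by (intro mult_right_mono) auto
    then show ?thesis using assms by (simp add: field_simps)
  qed
  finally show ?thesis .
qed

lemma down_lem: fixes y d c :: real assumes "y - d > 0" "d > 0" "c * y \<le> 1" shows "ln y - ln (y - d) > c * d"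
proof -
  have "ln (y - d) - ln y < (y - d - y) / y" using ln_strict[of "y-d" y] assms by simp
  also have "\<dots> = - (d / y)" by simp
  also have "\<dots> \<le> - (c * d)"
  proof -
    have "c * y * d \<le> 1 * d" using assms by (intro mult_right_mono) auto
    then show ?thesis using assms by (simp add: field_simps)
  qed
  finally show ?thesis by simp
qed
theorem corollary2:
  fixes I :: nat and dmax :: real and eps xi ell :: "nat \<Rightarrow> real" and da :: "nat \<Rightarrow> real"
  assumes hI: "I \<ge> 2"
    and hdmax: "dmax > 0"
    and heps: "\<forall>i\<in>{1..I}. eps i > 0"
    and hxi: "\<forall>i\<in>{1..I}. xi i > 0"
    and hell: "\<forall>i\<in>{1..I}. ell i > 0"
    and hmono: "\<forall>i\<in>{1..I}. \<forall>k\<in>{1..I}. i < k \<longrightarrow> mval eps xi ell i < mval eps xi ell k"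
    and hda: "allowing_NE I eps xi ell dmax da"
  shows
   "(\<forall>j\<in>{1..I}.
       (real I - real j) * dmax < mval eps xi ell j \<and> mval eps xi ell j < (real I - real j + 1) * dmax \<and>
       (\<forall>i\<in>{j..I}. ln (((real I - real j + 1) * dmax + eps i) / ((real I - real j) * dmax + eps i))
                       \<ge> xi i * ell i * dmax)
       \<longrightarrow> (let df = (\<lambda>i. if i < j then 0 else dmax) in
             forbidding_NE I eps xi ell dmax df \<and>
             payoff I eps xi ell j df < payoff I eps xi ell j da \<and>
             (\<forall>i\<in>{1..I} - {j}. payoff I eps xi ell i df > payoff I eps xi ell i da) \<and>
             (\<Sum>i\<in>{1..I}. df i) > (\<Sum>i\<in>{1..I}. da i)))
    \<and>
    (\<forall>j\<in>{1..I}.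
       (real I - real j) * dmax < mval eps xi ell j \<and> mval eps xi ell j < (real I - real j + 1) * dmax \<and>
       (\<forall>i\<in>{1..j}. ln (((real I - real j + 1) * dmax + eps i) / ((real I - real j) * dmax + eps i))
                       \<le> xi i * ell i * dmax)
       \<longrightarrow> (let df = (\<lambda>i. if i \<le> j then 0 else dmax) in
             forbidding_NE I eps xi ell dmax df \<and>
             (\<forall>i\<in>{1..I}. payoff I eps xi ell i df < payoff I eps xi ell i da) \<and>
             (\<Sum>i\<in>{1..I}. df i) < (\<Sum>i\<in>{1..I}. da i)))
    \<and>
    ((\<not> (\<exists>j\<in>{1..I}. (real I - real j) * dmax \<le> mval eps xi ell j \<and>
                      mval eps xi ell j \<le> (real I - real j + 1) * dmax))
       \<longrightarrow> forbidding_NE I eps xi ell dmax da)"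
proof -
  define S where "S = sum da {1..I}"
  define m where "m = mval eps xi ell"
  define c where "c = (\<lambda>i. xi i * ell i)"
  have cpos: "c i > 0" if "i \<in> {1..I}" for i using hxi hell that unfolding c_def by simp
  have mc: "1 / c i = m i + eps i" for i unfolding m_def c_def mval_def by simp
  have NE: "0 \<le> da i \<and> da i \<le> dmax \<and> (da i < dmax \<longrightarrow> m i \<le> S) \<and> (0 < da i \<longrightarrow> S \<le> m i)"
    if "i \<in> {1..I}" for i
    using NE_cond[OF hda that] heps hxi hell that unfolding S_def m_def by auto
  have mono: "m i < m k" if "i \<in> {1..I}" "k \<in> {1..I}" "i < k" for i k
    using hmono that unfolding m_def by blast
  have pay: "payoff I eps xi ell i d = ln (sum d {1..I} + eps i) - c i * d i" for i d
    unfolding payoff_alt c_def by simp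
  have payu: "payoff I eps xi ell i (d(i := x)) = ln (sum d {1..I} - d i + x + eps i) - c i * x"
    if "i \<in> {1..I}" for i d x
    unfolding payoff_upd[OF that] c_def by simp
  have ltI: "real I - real k \<ge> 0" if "k \<in> {1..I}" for k using that by simp
  have piece: "S = da k + (real I - real k) * dmax" if "k \<in> {1..I}"
      "\<forall>i\<in>{1..I}. i<k \<longrightarrow> da i = 0" "\<forall>i\<in>{1..I}. k<i \<longrightarrow> da i = dmax" for k
    unfolding S_def using that by (intro sum_piece) auto
  have char: "S = m k \<and> (\<forall>i\<in>{1..I}. i<k \<longrightarrow> da i = 0) \<and> (\<forall>i\<in>{1..I}. k<i \<longrightarrow> da i = dmax)
      \<and> da k = m k - (real I - real k) * dmax"
    if k: "k \<in> {1..I}" and b1: "(real I - real k) * dmax < m k" and b2: "m k < (real I - real k + 1) * dmax" for k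
  proof -
    have dist: "(real I - real k + 1) * dmax = (real I - real k) * dmax + dmax" by (simp add: algebra_simps)
    have n1: "\<not> S > m k"
    proof
      assume gt: "S > m k"
      have z: "da i = (if i \<le> k then 0 else da i)" if "i \<in> {1..I}" for i
      proof (cases "i \<le> k")
        case True
        then have "m i \<le> m k" using mono[OF that k] by (cases "i = k") auto
        then show ?thesis using NE[OF that] gt True by force
      qed simp
      have "S \<le> sum (\<lambda>i. if i \<le> k then 0 else dmax) {1..I}"
        unfolding S_def by (rule sum_mono) (use z NE in \<open>fastforce\<close>)
      also have "\<dots> = 0 + (real I - real k) * dmax" using k by (subst sum_piece[where b=dmax]) auto
      finally show False using gt b1 by simp
    qed
    have n2: "\<not> S < m k"
    proof
      assume lt: "S < m k"
      have z: "da i = (if i < k then da i else dmax)" if "i \<in> {1..I}" for i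
      proof (cases "i < k")
        case False
        then have "m k \<le> m i" using mono[OF k that] by (cases "i = k") auto
        then show ?thesis using NE[OF that] lt False by force
      qed simp
      have "sum (\<lambda>i. if i < k then 0 else dmax) {1..I} \<le> S"
        unfolding S_def by (rule sum_mono) (use z NE in \<open>fastforce\<close>)
      moreover have "sum (\<lambda>i. if i < k then 0 else dmax) {1..I} = dmax + (real I - real k) * dmax"
        using k by (subst sum_piece[where b=dmax]) auto
      ultimately show False using lt b2 dist by simp
    qed
    have Sm: "S = m k" using n1 n2 by simp
    have lo: "\<forall>i\<in>{1..I}. i<k \<longrightarrow> da i = 0"
    proof (intro ballI impI)
      fix i assume i: "i \<in> {1..I}" "i < k"
      then have "m i < S" using mono[OF i(1) k] Sm by simp
      then show "da i = 0" using NE[OF i(1)] by force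
    qed
    have hi: "\<forall>i\<in>{1..I}. k<i \<longrightarrow> da i = dmax"
    proof (intro ballI impI)
      fix i assume i: "i \<in> {1..I}" "k < i"
      then have "S < m i" using mono[OF k i(1)] Sm by simp
      then show "da i = dmax" using NE[OF i(1)] by force
    qed
    show ?thesis using Sm lo hi piece[OF k lo hi] by simp
  qed
  show ?thesis
  proof (intro conjI)
    show "\<forall>j\<in>{1..I}.
       (real I - real j) * dmax < mval eps xi ell j \<and> mval eps xi ell j < (real I - real j + 1) * dmax \<and>
       (\<forall>i\<in>{j..I}. ln (((real I - real j + 1) * dmax + eps i) / ((real I - real j) * dmax + eps i))
                       \<ge> xi i * ell i * dmax)
       \<longrightarrow> (let df = (\<lambda>i. if i < j then 0 else dmax) in
             forbidding_NE I eps xi ell dmax df \<and>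
             payoff I eps xi ell j df < payoff I eps xi ell j da \<and>
             (\<forall>i\<in>{1..I} - {j}. payoff I eps xi ell i df > payoff I eps xi ell i da) \<and>
             (\<Sum>i\<in>{1..I}. df i) > (\<Sum>i\<in>{1..I}. da i))"
    proof (intro ballI impI)
      fix j assume j: "j \<in> {1..I}" and H: "(real I - real j) * dmax < mval eps xi ell j \<and> mval eps xi ell j < (real I - real j + 1) * dmax \<and>
       (\<forall>i\<in>{j..I}. ln (((real I - real j + 1) * dmax + eps i) / ((real I - real j) * dmax + eps i))
                       \<ge> xi i * ell i * dmax)"
      have b1: "(real I - real j) * dmax < m j" and b2: "m j < (real I - real j + 1) * dmax"
        using H unfolding m_def by auto
      have L: "ln (((real I - real j + 1) * dmax + eps i) / ((real I - real j) * dmax + eps i)) \<ge> c i * dmax"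
        if "i \<in> {j..I}" for i using H that unfolding c_def by auto
      note ch = char[OF j b1 b2]
      have dist: "(real I - real j + 1) * dmax = (real I - real j) * dmax + dmax" by (simp add: algebra_simps)
      define df where "df = (\<lambda>i::nat. if i < j then 0 else dmax)"
      have Sf: "sum df {1..I} = dmax + (real I - real j) * dmax"
        using j unfolding df_def by (subst sum_piece[where b=dmax]) auto
      have S0: "S \<ge> 0" using ch b1 ltI[OF j] hdmax by (smt (verit) mult_nonneg_nonneg)
      have SfS: "sum df {1..I} > S" using Sf ch b2 dist by simp
      have NEf: "forbidding_NE I eps xi ell dmax df"
        unfolding forbidding_NE_def is_NE_def
      proof (intro conjI ballI)
        fix i assume "i \<in> {1..I}" then show "df i \<in> {0, dmax}" unfolding df_def by simp
      next
        fix i x assume i: "i \<in> {1..I}" and x: "x \<in> {0, dmax}"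
        show "payoff I eps xi ell i (df(i := x)) \<le> payoff I eps xi ell i df"
        proof (cases "x = df i")
          case True then show ?thesis by simp
        next
          case False
          show ?thesis
          proof (cases "i < j")
            case True
            then have dfi: "df i = 0" "x = dmax" using False x unfolding df_def by auto
            define y where "y = sum df {1..I} + eps i"
            have "m i < m j" using mono[OF i j True] .
            then have "1 / c i \<le> y" using mc[of i] b2 Sf dist unfolding y_def by linarith
            then have "c i * (1 / c i) \<le> c i * y" using cpos[OF i] by (intro mult_left_mono) auto
            then have "c i * y \<ge> 1" using cpos[OF i] by simp
            moreover have "y > 0" using SfS S0 heps i unfolding y_def by force
            ultimately have "ln (y + dmax) - ln y < c i * dmax" using up_lem hdmax by blast
            then show ?thesis unfolding payu[OF i] unfolding pay dfi y_def by (simp add: algebra_simps)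
          next
            case False2: False
            then have dfi: "df i = dmax" "x = 0" using False x unfolding df_def by auto
            have iJ: "i \<in> {j..I}" using i False2 by auto
            have p1: "(real I - real j) * dmax + eps i > 0" using ltI[OF j] hdmax heps i
              by (smt (verit) atLeastAtMost_iff mult_nonneg_nonneg)
            have "ln ((real I - real j + 1) * dmax + eps i) - ln ((real I - real j) * dmax + eps i) \<ge> c i * dmax"
              using L[OF iJ] p1 hdmax heps i dist by (simp add: ln_div)
            then show ?thesis unfolding payu[OF i] unfolding pay dfi Sf dist by (simp add: algebra_simps)
          qed
        qed
      qed
      have Pj: "payoff I eps xi ell j df < payoff I eps xi ell j da"
      proof -
        define y where "y = m j + eps j"
        have cy: "c j * y = 1" using mc[of j] cpos[OF j] unfolding y_def by (simp add: field_simps)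
        have dj: "df j = dmax" unfolding df_def by simp
        have "da j < dmax" using ch b2 dist by simp
        then have "ln (y + (dmax - da j)) - ln y < c j * (dmax - da j)"
          using up_lem[of y "dmax - da j" "c j"] cy cpos[OF j] mc[of j] unfolding y_def
          by (smt (verit) divide_pos_pos)
        moreover have "sum df {1..I} + eps j = y + (dmax - da j)" using Sf ch unfolding y_def by simp
        then have "payoff I eps xi ell j df = ln (y + (dmax - da j)) - c j * dmax" unfolding pay dj by simp
        moreover have "payoff I eps xi ell j da = ln y - c j * da j" unfolding pay S_def[symmetric] using ch y_def by simp
        ultimately show ?thesis by (simp add: algebra_simps)
      qed
      have Po: "payoff I eps xi ell i df > payoff I eps xi ell i da" if i: "i \<in> {1..I} - {j}" for i
      proof -
        have "df i = da i" using i ch unfolding df_def by auto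
        moreover have "ln (S + eps i) < ln (sum df {1..I} + eps i)"
          using SfS S0 heps i by (intro ln_less_cancel_iff[THEN iffD2]) (use heps i in force)+
        ultimately show ?thesis unfolding pay S_def by simp
      qed
      show "let df = (\<lambda>i. if i < j then 0 else dmax) in
             forbidding_NE I eps xi ell dmax df \<and>
             payoff I eps xi ell j df < payoff I eps xi ell j da \<and>
             (\<forall>i\<in>{1..I} - {j}. payoff I eps xi ell i df > payoff I eps xi ell i da) \<and>
             (\<Sum>i\<in>{1..I}. df i) > (\<Sum>i\<in>{1..I}. da i)"
        unfolding Let_def df_def[symmetric] using NEf Pj Po SfS unfolding S_def by blast
    qed
  next
    show "\<forall>j\<in>{1..I}.
       (real I - real j) * dmax < mval eps xi ell j \<and> mval eps xi ell j < (real I - real j + 1) * dmax \<and>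
       (\<forall>i\<in>{1..j}. ln (((real I - real j + 1) * dmax + eps i) / ((real I - real j) * dmax + eps i))
                       \<le> xi i * ell i * dmax)
       \<longrightarrow> (let df = (\<lambda>i. if i \<le> j then 0 else dmax) in
             forbidding_NE I eps xi ell dmax df \<and>
             (\<forall>i\<in>{1..I}. payoff I eps xi ell i df < payoff I eps xi ell i da) \<and>
             (\<Sum>i\<in>{1..I}. df i) < (\<Sum>i\<in>{1..I}. da i))"
    proof (intro ballI impI)
      fix j assume j: "j \<in> {1..I}" and H: "(real I - real j) * dmax < mval eps xi ell j \<and> mval eps xi ell j < (real I - real j + 1) * dmax \<and>
       (\<forall>i\<in>{1..j}. ln (((real I - real j + 1) * dmax + eps i) / ((real I - real j) * dmax + eps i))
                       \<le> xi i * ell i * dmax)"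
      have b1: "(real I - real j) * dmax < m j" and b2: "m j < (real I - real j + 1) * dmax"
        using H unfolding m_def by auto
      have L: "ln (((real I - real j + 1) * dmax + eps i) / ((real I - real j) * dmax + eps i)) \<le> c i * dmax"
        if "i \<in> {1..j}" for i using H that unfolding c_def by auto
      note ch = char[OF j b1 b2]
      have dist: "(real I - real j + 1) * dmax = (real I - real j) * dmax + dmax" by (simp add: algebra_simps)
      define df where "df = (\<lambda>i::nat. if i \<le> j then 0 else dmax)"
      have Sf: "sum df {1..I} = (real I - real j) * dmax"
        using j unfolding df_def by (subst sum_piece[where b=dmax]) auto
      have Sf0: "sum df {1..I} \<ge> 0" using Sf ltI[OF j] hdmax by simp
      have SfS: "sum df {1..I} < S" using Sf ch b1 by simp
      have NEf: "forbidding_NE I eps xi ell dmax df"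
        unfolding forbidding_NE_def is_NE_def
      proof (intro conjI ballI)
        fix i assume "i \<in> {1..I}" then show "df i \<in> {0, dmax}" unfolding df_def by simp
      next
        fix i x assume i: "i \<in> {1..I}" and x: "x \<in> {0, dmax}"
        show "payoff I eps xi ell i (df(i := x)) \<le> payoff I eps xi ell i df"
        proof (cases "x = df i")
          case True then show ?thesis by simp
        next
          case False
          show ?thesis
          proof (cases "i \<le> j")
            case True
            then have dfi: "df i = 0" "x = dmax" using False x unfolding df_def by auto
            have iJ: "i \<in> {1..j}" using i True by auto
            have p1: "(real I - real j) * dmax + eps i > 0" using Sf0 Sf heps i by force
            have "ln ((real I - real j + 1) * dmax + eps i) - ln ((real I - real j) * dmax + eps i) \<le> c i * dmax"
              using L[OF iJ] p1 hdmax heps i dist by (simp add: ln_div)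
            then show ?thesis unfolding payu[OF i] unfolding pay dfi Sf dist by (simp add: algebra_simps)
          next
            case False2: False
            then have dfi: "df i = dmax" "x = 0" using False x unfolding df_def by auto
            define y where "y = sum df {1..I} + eps i"
            have "m j < m i" using mono[OF j i] False2 by simp
            then have "y \<le> 1 / c i" using mc[of i] b1 Sf unfolding y_def by linarith
            then have "c i * y \<le> c i * (1 / c i)" using cpos[OF i] by (intro mult_left_mono) auto
            then have "c i * y \<le> 1" using cpos[OF i] by simp
            moreover have "real I - real j \<ge> 1" using False2 i by auto
            then have "(real I - real j) * dmax \<ge> 1 * dmax" using hdmax by (intro mult_right_mono) auto
            then have "y - dmax > 0" using Sf heps i unfolding y_def by force
            ultimately have "ln y - ln (y - dmax) > c i * dmax" using down_lem hdmax by blast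
            then show ?thesis unfolding payu[OF i] unfolding pay dfi y_def by (simp add: algebra_simps)
          qed
        qed
      qed
      have Pj: "payoff I eps xi ell j df < payoff I eps xi ell j da"
      proof -
        define y where "y = m j + eps j"
        have cy: "c j * y = 1" using mc[of j] cpos[OF j] unfolding y_def by (simp add: field_simps)
        have dj: "df j = 0" unfolding df_def by simp
        have "da j > 0" using ch b1 by simp
        moreover have "y - da j > 0" using ch Sf0 Sf heps j unfolding y_def by force
        ultimately have "ln y - ln (y - da j) > c j * da j"
          using down_lem[of y "da j" "c j"] cy by simp
        moreover have "sum df {1..I} + eps j = y - da j" using Sf ch unfolding y_def by simp
        then have "payoff I eps xi ell j df = ln (y - da j)" unfolding pay dj by simp
        moreover have "payoff I eps xi ell j da = ln y - c j * da j" unfolding pay S_def[symmetric] using ch y_def by simp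
        ultimately show ?thesis by (simp add: algebra_simps)
      qed
      have Po: "payoff I eps xi ell i df < payoff I eps xi ell i da" if i: "i \<in> {1..I}" for i
      proof (cases "i = j")
        case True then show ?thesis using Pj by simp
      next
        case False
        have "df i = da i" using i ch False unfolding df_def by auto
        moreover have "ln (sum df {1..I} + eps i) < ln (S + eps i)"
          using SfS Sf0 heps i by (intro ln_less_cancel_iff[THEN iffD2]) (use heps i in force)+
        ultimately show ?thesis unfolding pay S_def by simp
      qed
      show "let df = (\<lambda>i. if i \<le> j then 0 else dmax) in
             forbidding_NE I eps xi ell dmax df \<and>
             (\<forall>i\<in>{1..I}. payoff I eps xi ell i df < payoff I eps xi ell i da) \<and>
             (\<Sum>i\<in>{1..I}. df i) < (\<Sum>i\<in>{1..I}. da i)"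
        unfolding Let_def df_def[symmetric] using NEf Po SfS unfolding S_def by blast
    qed
  next
    show "(\<not> (\<exists>j\<in>{1..I}. (real I - real j) * dmax \<le> mval eps xi ell j \<and>
                      mval eps xi ell j \<le> (real I - real j + 1) * dmax))
       \<longrightarrow> forbidding_NE I eps xi ell dmax da"
    proof
      assume N: "\<not> (\<exists>j\<in>{1..I}. (real I - real j) * dmax \<le> mval eps xi ell j \<and>
                      mval eps xi ell j \<le> (real I - real j + 1) * dmax)"
      have bin: "da k \<in> {0, dmax}" if k: "k \<in> {1..I}" for k
      proof (rule ccontr)
        assume "da k \<notin> {0, dmax}"
        then have p: "0 < da k" "da k < dmax" using NE[OF k] by auto
        then have Sm: "S = m k" using NE[OF k] by force
        have lo: "\<forall>i\<in>{1..I}. i<k \<longrightarrow> da i = 0"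
        proof (intro ballI impI)
          fix i assume i: "i \<in> {1..I}" "i < k"
          then have "m i < S" using mono[OF i(1) k] Sm by simp
          then show "da i = 0" using NE[OF i(1)] by force
        qed
        have hi: "\<forall>i\<in>{1..I}. k<i \<longrightarrow> da i = dmax"
        proof (intro ballI impI)
          fix i assume i: "i \<in> {1..I}" "k < i"
          then have "S < m i" using mono[OF k i(1)] Sm by simp
          then show "da i = dmax" using NE[OF i(1)] by force
        qed
        have "S = da k + (real I - real k) * dmax" using piece[OF k lo hi] .
        moreover have "(real I - real k + 1) * dmax = (real I - real k) * dmax + dmax" by (simp add: algebra_simps)
        ultimately show False using N k Sm p unfolding m_def by force
      qed
      have dev: "\<forall>i\<in>{1..I}. \<forall>x\<in>{0..dmax}. payoff I eps xi ell i (da(i := x)) \<le> payoff I eps xi ell i da"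
        using hda unfolding allowing_NE_def is_NE_def by blast
      show "forbidding_NE I eps xi ell dmax da"
        unfolding forbidding_NE_def is_NE_def using bin dev hdmax by auto
    qed
  qed
qed

end
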